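(* Let $G=(\mathcal{V},\mathcal{E})$ be a hypergraph, $P$ a pmf on $\mathcal{V}$, and $L\ge1$ an integer. If the subhypergraph $G_P$ of $G$ induced by $P$ is complete multipartite, then $$\max_{\ell\in[L+1]}\frac1\ell\,\theta^{(\ell)}_{L+1}(G,P)=\frac{1}{L+1}I_{L+1}(G,P).$$
   Context: Notation: $[j]=\{1,\dots,j\}$, $[i:j]=\{i,\dots,j\}$; $\log$ base 2. A hypergraph $G=(\mathcal{V},\mathcal{E})$ has finite $\mathcal{V}$ and $\mathcal{E}\subseteq2^{\mathcal{V}}$ with edges of cardinality $\ge2$. An independent set is a vertex subset none of whose subsets is an edge; a hypergraph is complete multipartite if its vertex set has a partition $\{\mathcal{I}_j\}$ into independent sets such that every vertex subset is either an edge or contained in some $\mathcal{I}_j$. $G_P=(\mathcal{V}_P,\mathcal{E}_P)$ with $\mathcal{V}_P=\mathrm{supp}(P)$ and $\mathcal{E}_P$ the edges of $G$ contained in $\mathcal{V}_P$. For $v_{[k]}\in\mathcal{V}^k$, $\sigma(v_{[k]})=\{v_1,\dots,v_k\}$, $P(v_S)=\prod_{j\in S}P(v_j)$. $I_{L+1}(G,P):=-\frac1L\log\sum_{v_{[L+1]}:\sigma(v_{[L+1]})\notin\mathcal{E}}P(v_{[L+1]})$, $\theta^{(L+1)}_{L+1}(G,P):=I_{L+1}(G,P)$, and for $\ell\in[L]$, $\theta^{(\ell)}_{L+1}(G,P):=2I_{L+1}(G,P)+\frac1L\log\sum_{v_{[\ell]}}P(v_{[\ell]})\Big[\sum_{v_{[\ell+1:L+1]}:\sigma(v_{[L+1]})\notin\mathcal{E}}P(v_{[\ell+1:L+1]})\Big]^2$.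 *)

theory Defs
  imports Complex_Main "HOL-Library.Disjoint_Sets"
begin

definition hypergraph :: "'a set \<Rightarrow> 'a set set \<Rightarrow> bool" where
  "hypergraph V E \<longleftrightarrow> finite V \<and> (\<forall>e\<in>E. e \<subseteq> V \<and> card e \<ge> 2)"

definition is_pmf :: "'a set \<Rightarrow> ('a \<Rightarrow> real) \<Rightarrow> bool" where
  "is_pmf V P \<longleftrightarrow> (\<forall>v\<in>V. P v \<ge> 0) \<and> (\<Sum>v\<in>V. P v) = 1"

definition supp :: "'a set \<Rightarrow> ('a \<Rightarrow> real) \<Rightarrow> 'a set" where
  "supp V P = {v\<in>V. P v \<noteq> 0}"

text \<open>Induced subhypergraph G_P: vertices supp P, edges of G contained in supp P.\<close>
definition induced_edges :: "'a set \<Rightarrow> 'a set set \<Rightarrow> ('a \<Rightarrow> real) \<Rightarrow> 'a set set" where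
  "induced_edges V E P = {e\<in>E. e \<subseteq> supp V P}"

definition independent_set :: "'a set \<Rightarrow> 'a set set \<Rightarrow> 'a set \<Rightarrow> bool" where
  "independent_set V E S \<longleftrightarrow> S \<subseteq> V \<and> (\<forall>T. T \<subseteq> S \<longrightarrow> T \<notin> E)"

definition complete_multipartite :: "'a set \<Rightarrow> 'a set set \<Rightarrow> bool" where
  "complete_multipartite V E \<longleftrightarrow>
     (\<exists>Parts. partition_on V Parts \<and> (\<forall>I\<in>Parts. independent_set V E I) \<and>
          (\<forall>S. S \<subseteq> V \<longrightarrow> S \<in> E \<or> (\<exists>I\<in>Parts. S \<subseteq> I)))"

definition tuples :: "'a set \<Rightarrow> nat \<Rightarrow> 'a list set" where
  "tuples V k = {xs. set xs \<subseteq> V \<and> length xs = k}"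

definition Pt :: "('a \<Rightarrow> real) \<Rightarrow> 'a list \<Rightarrow> real" where
  "Pt P xs = prod_list (map P xs)"

definition I_L1 :: "'a set \<Rightarrow> 'a set set \<Rightarrow> ('a \<Rightarrow> real) \<Rightarrow> nat \<Rightarrow> real" where
  "I_L1 V E P L = - (1 / real L) *
     log 2 (\<Sum>xs\<in>{xs\<in>tuples V (L+1). set xs \<notin> E}. Pt P xs)"

definition theta :: "'a set \<Rightarrow> 'a set set \<Rightarrow> ('a \<Rightarrow> real) \<Rightarrow> nat \<Rightarrow> nat \<Rightarrow> real" where
  "theta V E P L l =
     (if l = L + 1 then I_L1 V E P L
      else 2 * I_L1 V E P L + (1 / real L) *
        log 2 (\<Sum>xs\<in>tuples V l. Pt P xs *
                 (\<Sum>ys\<in>{ys\<in>tuples V (L + 1 - l). set (xs @ ys) \<notin> E}. Pt P ys)\<^sup>2))"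

end

theory Submission
  imports Defs
begin

lemma finite_tuples: "finite A \<Longrightarrow> finite (tuples A k)"
  unfolding tuples_def by (rule finite_lists_length_eq)

lemma tuples_Suc: "tuples A (Suc k) = (\<lambda>(x,xs). x#xs) ` (A \<times> tuples A k)"
  unfolding tuples_def
  by (auto simp: length_Suc_conv image_iff)

lemma sum_tuples: "finite A \<Longrightarrow> (\<Sum>xs\<in>tuples A k. Pt P xs) = (sum P A)^k"
proof (induction k)
  case 0
  have "tuples A 0 = {[]}" unfolding tuples_def by auto
  then show ?case by (simp add: Pt_def)
next
  case (Suc k)
  have inj: "inj_on (\<lambda>(x,xs). x#xs) (A \<times> tuples A k)" by (auto simp: inj_on_def)
  have "(\<Sum>xs\<in>tuples A (Suc k). Pt P xs) = (\<Sum>(x,xs)\<in>A \<times> tuples A k. P x * Pt P xs)"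
    unfolding tuples_Suc by (subst sum.reindex[OF inj]) (auto simp: Pt_def case_prod_beta intro!: sum.cong)
  also have "\<dots> = (\<Sum>x\<in>A. \<Sum>xs\<in>tuples A k. P x * Pt P xs)"
    by (rule sum.cartesian_product[symmetric])
  also have "\<dots> = sum P A * (sum P A)^k"
    by (simp add: sum_distrib_left[symmetric] sum_distrib_right[symmetric] Suc)
  finally show ?case by simp
qed

lemma pow_ineq:
  fixes p :: "'b \<Rightarrow> real"
  assumes fin: "finite J" and nn: "\<And>j. j\<in>J \<Longrightarrow> p j \<ge> 0" and q: "q > 0" and kq: "k \<ge> q"
    and spos: "(\<Sum>j\<in>J. p j ^ q) > 0"
  shows "(\<Sum>j\<in>J. p j ^ k) \<le> (\<Sum>j\<in>J. p j ^ q) powr (real k / real q)"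
proof -
  let ?s = "\<Sum>j\<in>J. p j ^ q"
  have s0: "?s \<ge> 0" using nn by (simp add: sum_nonneg)
  have each: "p j ^ k \<le> p j ^ q * ?s powr (real (k - q) / real q)" if j: "j \<in> J" for j
  proof -
    have pq: "p j ^ q \<le> ?s" using j fin nn by (intro member_le_sum) auto
    have "p j = (p j ^ q) powr (1 / real q)"
    proof (cases "p j = 0")
      case True then show ?thesis using q by simp
    next
      case False
      then have "p j > 0" using nn[OF j] by linarith
      then show ?thesis using q by (simp add: powr_realpow[symmetric] powr_powr)
    qed
    also have "\<dots> \<le> ?s powr (1 / real q)"
      using pq nn[OF j] by (intro powr_mono2) auto
    finally have pj: "p j \<le> ?s powr (1 / real q)" .
    have "p j ^ (k - q) \<le> (?s powr (1 / real q)) ^ (k - q)"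
      using pj nn[OF j] by (intro power_mono) auto
    also have "\<dots> = ?s powr (real (k - q) / real q)"
      using spos by (simp add: powr_realpow[symmetric] powr_powr)
    finally have "p j ^ q * p j ^ (k - q) \<le> p j ^ q * ?s powr (real (k - q) / real q)"
      using nn[OF j] by (intro mult_left_mono) auto
    then show ?thesis using kq by (simp add: power_add[symmetric])
  qed
  have "(\<Sum>j\<in>J. p j ^ k) \<le> (\<Sum>j\<in>J. p j ^ q * ?s powr (real (k - q) / real q))"
    by (intro sum_mono each)
  also have "\<dots> = ?s * ?s powr (real (k - q) / real q)" by (simp add: sum_distrib_right)
  also have "\<dots> = ?s powr (real k / real q)"
  proof (cases "?s = 0")
    case True then show ?thesis by simp
  next
    case False
    then have "?s * ?s powr (real (k - q) / real q) = ?s powr (1 + real (k - q) / real q)"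
      using s0 by (simp add: powr_add)
    also have "1 + real (k - q) / real q = real k / real q" using q kq by (simp add: field_simps of_nat_diff)
    finally show ?thesis .
  qed
  finally show ?thesis .
qed

theorem mainTheorem8:
  fixes V :: "'a set" and E :: "'a set set" and P :: "'a \<Rightarrow> real" and L :: nat
  assumes "hypergraph V E"
    and "is_pmf V P"
    and "L \<ge> 1"
    and "complete_multipartite (supp V P) (induced_edges V E P)"
  shows "Max ((\<lambda>l. theta V E P L l / real l) ` {1..L+1}) = I_L1 V E P L / real (L + 1)"
proof -
  define T where "T = supp V P"
  have finV: "finite V" using assms(1) unfolding hypergraph_def by auto
  have TV: "T \<subseteq> V" unfolding T_def supp_def by auto
  have finT: "finite T" using TV finV finite_subset by auto
  have Ppos: "\<And>v. v \<in> T \<Longrightarrow> P v > 0"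
    using assms(2) unfolding T_def supp_def is_pmf_def by fastforce
  have Pz: "\<And>v. v \<in> V \<Longrightarrow> v \<notin> T \<Longrightarrow> P v = 0"
    unfolding T_def supp_def by auto
  obtain Parts where part: "partition_on T Parts"
    and indep: "\<forall>I\<in>Parts. independent_set T (induced_edges V E P) I"
    and cmp: "\<forall>S. S \<subseteq> T \<longrightarrow> S \<in> induced_edges V E P \<or> (\<exists>I\<in>Parts. S \<subseteq> I)"
    using assms(4) unfolding complete_multipartite_def T_def by blast
  have UP: "\<Union>Parts = T" and disj: "disjoint Parts" and ne: "{} \<notin> Parts"
    using part unfolding partition_on_def by auto
  have PsubT: "\<And>I. I \<in> Parts \<Longrightarrow> I \<subseteq> T" using UP by auto
  have finParts: "finite Parts" using UP finT by (simp add: finite_UnionD)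
  have finI: "\<And>I. I \<in> Parts \<Longrightarrow> finite I" using PsubT finT finite_subset by meson
  have uniq: "\<And>I J x. I \<in> Parts \<Longrightarrow> J \<in> Parts \<Longrightarrow> x \<in> I \<Longrightarrow> x \<in> J \<Longrightarrow> I = J"
    using disj unfolding disjoint_def by blast
  have key: "\<And>S. S \<subseteq> T \<Longrightarrow> (S \<notin> E \<longleftrightarrow> (\<exists>I\<in>Parts. S \<subseteq> I))"
  proof -
    fix S assume S: "S \<subseteq> T"
    show "(S \<notin> E \<longleftrightarrow> (\<exists>I\<in>Parts. S \<subseteq> I))"
    proof
      assume "S \<notin> E"
      then have "S \<notin> induced_edges V E P" unfolding induced_edges_def by auto
      then show "\<exists>I\<in>Parts. S \<subseteq> I" using cmp S by blast
    next
      assume "\<exists>I\<in>Parts. S \<subseteq> I"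
      then obtain I where I: "I \<in> Parts" "S \<subseteq> I" by blast
      then have "S \<notin> induced_edges V E P" using indep unfolding independent_set_def by blast
      then show "S \<notin> E" using S unfolding induced_edges_def T_def by auto
    qed
  qed
  have Ptz: "\<And>xs. xs \<in> tuples V k \<Longrightarrow> xs \<notin> tuples T k \<Longrightarrow> Pt P xs = 0" for k
  proof -
    fix xs assume a: "xs \<in> tuples V k" "xs \<notin> tuples T k"
    then obtain v where "v \<in> set xs" "v \<notin> T" "v \<in> V" unfolding tuples_def by auto
    then have "0 \<in> set (map P xs)" using Pz by force
    then show "Pt P xs = 0" unfolding Pt_def by (simp add: prod_list_zero_iff)
  qed
  have tTV: "tuples T k \<subseteq> tuples V k" for k using TV unfolding tuples_def by auto
  have restr: "(\<Sum>xs\<in>{xs\<in>tuples V k. Q xs}. Pt P xs * h xs) = (\<Sum>xs\<in>{xs\<in>tuples T k. Q xs}. Pt P xs * h xs)"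
    for k Q and h :: "'a list \<Rightarrow> real"
    by (rule sum.mono_neutral_right) (use finite_tuples[OF finV, of k] tTV Ptz in auto)
  define p where "p I = sum P I" for I
  have tupUnion: "{xs\<in>tuples T k. \<exists>I\<in>Parts. set xs \<subseteq> I} = (\<Union>I\<in>Parts. tuples I k)" for k
    using PsubT unfolding tuples_def by blast
  have tupdisj: "\<forall>I\<in>Parts. \<forall>J\<in>Parts. I \<noteq> J \<longrightarrow> tuples I k \<inter> tuples J k = {}" if "k \<ge> 1" for k
  proof (intro ballI impI)
    fix I J assume IJ: "I \<in> Parts" "J \<in> Parts" "I \<noteq> J"
    show "tuples I k \<inter> tuples J k = {}"
    proof (rule ccontr)
      assume "tuples I k \<inter> tuples J k \<noteq> {}"
      then obtain xs where xs: "set xs \<subseteq> I" "set xs \<subseteq> J" "length xs = k" unfolding tuples_def by auto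
      then have "xs \<noteq> []" using that by auto
      then obtain x where "x \<in> set xs" by (cases xs) auto
      then show False using xs IJ uniq by blast
    qed
  qed
  have sumU: "(\<Sum>xs\<in>{xs\<in>tuples T k. \<exists>I\<in>Parts. set xs \<subseteq> I}. f xs) = (\<Sum>I\<in>Parts. \<Sum>xs\<in>tuples I k. f xs)"
    if "k \<ge> 1" for k and f :: "'a list \<Rightarrow> real"
    unfolding tupUnion by (rule sum.UNION_disjoint) (use finParts finI finite_tuples tupdisj[OF that] in auto)
  have NE: "(\<Sum>xs\<in>{xs\<in>tuples V k. set xs \<notin> E}. Pt P xs) = (\<Sum>I\<in>Parts. p I ^ k)" if "k \<ge> 1" for k
  proof -
    have "(\<Sum>xs\<in>{xs\<in>tuples V k. set xs \<notin> E}. Pt P xs) = (\<Sum>xs\<in>{xs\<in>tuples T k. set xs \<notin> E}. Pt P xs * 1)"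
      using restr[where k=k and Q="\<lambda>xs. set xs \<notin> E" and h="\<lambda>_. 1"] by simp
    also have "{xs\<in>tuples T k. set xs \<notin> E} = {xs\<in>tuples T k. \<exists>I\<in>Parts. set xs \<subseteq> I}"
      using key unfolding tuples_def by auto
    also have "(\<Sum>xs\<in>{xs\<in>tuples T k. \<exists>I\<in>Parts. set xs \<subseteq> I}. Pt P xs * 1) = (\<Sum>I\<in>Parts. \<Sum>xs\<in>tuples I k. Pt P xs)"
      using sumU[OF that] by simp
    also have "\<dots> = (\<Sum>I\<in>Parts. p I ^ k)"
      using finI sum_tuples unfolding p_def by (intro sum.cong) auto
    finally show ?thesis .
  qed
  have TH: "(\<Sum>xs\<in>tuples V l. Pt P xs *
                 (\<Sum>ys\<in>{ys\<in>tuples V m. set (xs @ ys) \<notin> E}. Pt P ys)\<^sup>2) = (\<Sum>I\<in>Parts. p I ^ (l + 2*m))"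
    if "l \<ge> 1" for l m
  proof -
    define inner where "inner xs = (\<Sum>ys\<in>{ys\<in>tuples V m. set (xs @ ys) \<notin> E}. Pt P ys)" for xs
    have inner_T: "inner xs = (\<Sum>ys\<in>{ys\<in>tuples T m. set (xs @ ys) \<notin> E}. Pt P ys)" if "xs \<in> tuples T l" for xs
      using restr[where k=m and Q="\<lambda>ys. set (xs @ ys) \<notin> E" and h="\<lambda>_. 1"] unfolding inner_def by simp
    have inner0: "inner xs = 0" if "xs \<in> tuples T l" "\<not> (\<exists>I\<in>Parts. set xs \<subseteq> I)" for xs
    proof -
      have "{ys\<in>tuples T m. set (xs @ ys) \<notin> E} = {}"
      proof (rule ccontr)
        assume "{ys\<in>tuples T m. set (xs @ ys) \<notin> E} \<noteq> {}"
        then obtain ys where "ys \<in> tuples T m" "set (xs @ ys) \<notin> E" by auto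
        moreover have "set (xs @ ys) \<subseteq> T" using that(1) \<open>ys \<in> tuples T m\<close> unfolding tuples_def by auto
        ultimately obtain I where "I \<in> Parts" "set (xs @ ys) \<subseteq> I" using key by blast
        then show False using that(2) by auto
      qed
      then show ?thesis using inner_T[OF that(1)] by (simp only: sum.empty)
    qed
    have innerI: "inner xs = p I ^ m" if I: "I \<in> Parts" and xs: "xs \<in> tuples I l" for xs I
    proof -
      have xsne: "xs \<noteq> []" using xs \<open>l \<ge> 1\<close> unfolding tuples_def by auto
      then obtain x where x: "x \<in> set xs" by (cases xs) auto
      have xsT: "xs \<in> tuples T l" using xs PsubT[OF I] unfolding tuples_def by auto
      have "{ys\<in>tuples T m. set (xs @ ys) \<notin> E} = tuples I m"
      proof (intro equalityI subsetI)
        fix ys assume ys: "ys \<in> {ys\<in>tuples T m. set (xs @ ys) \<notin> E}"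
        then have "set (xs @ ys) \<subseteq> T" using xsT unfolding tuples_def by auto
        then obtain J where J: "J \<in> Parts" "set (xs @ ys) \<subseteq> J" using key ys by blast
        then have "J = I" using uniq[OF J(1) I, of x] x xs unfolding tuples_def by auto
        then show "ys \<in> tuples I m" using J ys unfolding tuples_def by auto
      next
        fix ys assume ys: "ys \<in> tuples I m"
        then have "set (xs @ ys) \<subseteq> I" using xs unfolding tuples_def by auto
        moreover have "set (xs @ ys) \<subseteq> T" using calculation PsubT[OF I] by auto
        ultimately have "set (xs @ ys) \<notin> E" using key I by blast
        then show "ys \<in> {ys\<in>tuples T m. set (xs @ ys) \<notin> E}" using ys PsubT[OF I] unfolding tuples_def by auto
      qed
      then show ?thesis using inner_T[OF xsT] sum_tuples[OF finI[OF I]] unfolding p_def by simp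
    qed
    have "(\<Sum>xs\<in>tuples V l. Pt P xs * (inner xs)\<^sup>2) = (\<Sum>xs\<in>{xs\<in>tuples V l. True}. Pt P xs * (inner xs)\<^sup>2)"
      by simp
    also have "\<dots> = (\<Sum>xs\<in>tuples T l. Pt P xs * (inner xs)\<^sup>2)"
      using restr[where k=l and Q="\<lambda>_. True" and h="\<lambda>xs. (inner xs)\<^sup>2"] by simp
    also have "\<dots> = (\<Sum>xs\<in>{xs\<in>tuples T l. \<exists>I\<in>Parts. set xs \<subseteq> I}. Pt P xs * (inner xs)\<^sup>2)"
      by (rule sum.mono_neutral_right) (use finite_tuples[OF finT, of l] inner0 in auto)
    also have "\<dots> = (\<Sum>I\<in>Parts. \<Sum>xs\<in>tuples I l. Pt P xs * (inner xs)\<^sup>2)"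
      by (rule sumU[OF that])
    also have "\<dots> = (\<Sum>I\<in>Parts. \<Sum>xs\<in>tuples I l. Pt P xs * (p I ^ m)\<^sup>2)"
      using innerI by (intro sum.cong refl) auto
    also have "\<dots> = (\<Sum>I\<in>Parts. p I ^ l * (p I ^ m)\<^sup>2)"
      using finI unfolding p_def by (intro sum.cong refl) (simp add: sum_distrib_right[symmetric] sum_tuples)
    also have "\<dots> = (\<Sum>I\<in>Parts. p I ^ (l + 2*m))"
      by (simp add: power_add power_mult[symmetric] mult.commute)
    finally show ?thesis unfolding inner_def .
  qed
  have ppos: "\<And>I. I \<in> Parts \<Longrightarrow> p I > 0"
  proof -
    fix I assume I: "I \<in> Parts"
    then obtain x where "x \<in> I" using ne by (metis all_not_in_conv)
    then show "p I > 0" unfolding p_def using finI[OF I] PsubT[OF I] Ppos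
      by (intro sum_pos2[of _ x]) (auto simp: less_imp_le)
  qed
  have Partsne: "Parts \<noteq> {}"
  proof
    assume "Parts = {}"
    then have "T = {}" using UP by auto
    then have "sum P V = 0" using Pz by (intro sum.neutral) auto
    then show False using assms(2) unfolding is_pmf_def by simp
  qed
  define q where "q = L + 1"
  define s where "s = (\<Sum>I\<in>Parts. p I ^ q)"
  have spos: "s > 0" unfolding s_def using Partsne finParts ppos
    by (metis all_not_in_conv sum_pos zero_less_power)
  have Ieq: "I_L1 V E P L = - (1 / real L) * log 2 s"
    unfolding I_L1_def s_def q_def using NE[of "L+1"] by simp
  let ?f = "\<lambda>l. theta V E P L l / real l"
  have bound: "?f l \<le> I_L1 V E P L / real (L + 1)" if l: "l \<in> {1..L+1}" for l
  proof (cases "l = L + 1")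
    case True then show ?thesis unfolding theta_def by simp
  next
    case False
    then have l1: "1 \<le> l" "l \<le> L" using l by auto
    define k where "k = l + 2 * (L + 1 - l)"
    have kq: "k \<ge> q" unfolding k_def q_def using l1 by auto
    have kr: "real k = 2 * real q - real l" unfolding k_def q_def using l1 by (simp add: of_nat_diff)
    have th: "theta V E P L l = 2 * I_L1 V E P L + (1 / real L) * log 2 (\<Sum>I\<in>Parts. p I ^ k)"
      unfolding theta_def using False TH[OF l1(1), of "L + 1 - l"] unfolding k_def by simp
    have Sk_pos: "(\<Sum>I\<in>Parts. p I ^ k) > 0" using Partsne finParts ppos
      by (metis all_not_in_conv sum_pos zero_less_power)
    have "(\<Sum>I\<in>Parts. p I ^ k) \<le> s powr (real k / real q)"
      unfolding s_def using pow_ineq[of Parts p q k] finParts ppos kq spos unfolding s_def q_def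
      by (auto simp: less_imp_le)
    then have "log 2 (\<Sum>I\<in>Parts. p I ^ k) \<le> log 2 (s powr (real k / real q))"
      using Sk_pos by (intro log_mono) auto
    also have "\<dots> = (real k / real q) * log 2 s" using spos by (simp add: log_powr)
    finally have lg: "log 2 (\<Sum>I\<in>Parts. p I ^ k) \<le> (real k / real q) * log 2 s" .
    have Lpos: "real L > 0" using assms(3) by simp
    have qpos: "real q > 0" unfolding q_def by simp
    have "theta V E P L l \<le> 2 * (- (1 / real L) * log 2 s) + (1 / real L) * ((real k / real q) * log 2 s)"
    proof -
      have "(1 / real L) * log 2 (\<Sum>I\<in>Parts. p I ^ k) \<le> (1 / real L) * ((real k / real q) * log 2 s)"
        using lg Lpos by (intro mult_left_mono) auto
      then show ?thesis unfolding th Ieq by linarith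
    qed
    also have "\<dots> = real l * (- (1 / real L) * log 2 s / real q)"
      unfolding kr using Lpos qpos by (simp add: field_simps)
    finally have "theta V E P L l \<le> real l * (I_L1 V E P L / real (L + 1))"
      unfolding Ieq q_def by simp
    then show ?thesis using l1 by (simp add: divide_le_eq mult.commute)
  qed
  show ?thesis
  proof (rule Max_eqI)
    show "finite (?f ` {1..L+1})" by simp
    show "\<And>y. y \<in> ?f ` {1..L+1} \<Longrightarrow> y \<le> I_L1 V E P L / real (L + 1)" using bound by auto
    show "I_L1 V E P L / real (L + 1) \<in> ?f ` {1..L+1}"
      by (rule image_eqI[of _ _ "L+1"]) (auto simp: theta_def)
  qed
qed
end
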